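(* Let $n\geq 6$ and $p\geq 2$. Then $\rho(\mathbf{S}_{p}(B_{4}))<\rho(\mathbf{S}_{p}(B_{3}))$.
   Context: All graphs are simple and connected; $d_i$ is the degree of $v_i$. The $p$-Sombor matrix $\mathbf{S}_{p}(G)$ has $(i,j)$-entry $(d_i^{p}+d_j^{p})^{1/p}$ if $v_iv_j\in E(G)$ and $0$ otherwise; $\rho(\mathbf{S}_{p}(G))$ is its largest eigenvalue. The diamond is $K_4$ minus an edge; call its two adjacent degree-3 vertices $u,v$ and its two nonadjacent degree-2 vertices $a,b$. $B_3$ is the graph of order $n$ obtained from the diamond by attaching $n-5$ pendant vertices to $u$ and one pendant vertex to $v$; $B_4$ is the graph of order $n$ obtained from the diamond by attaching $n-4$ pendant vertices to $a$. *)

theory Defs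
  imports Complex_Main "Jordan_Normal_Form.Char_Poly"
begin

(* A simple graph on the vertex set {0..<n} is given by a symmetric,
   irreflexive edge predicate E. *)

definition degree :: "nat \<Rightarrow> (nat \<Rightarrow> nat \<Rightarrow> bool) \<Rightarrow> nat \<Rightarrow> nat" where
  "degree n E i = card {j \<in> {0..<n}. E i j}"

definition sombor_matrix :: "nat \<Rightarrow> (nat \<Rightarrow> nat \<Rightarrow> bool) \<Rightarrow> real \<Rightarrow> real mat" where
  "sombor_matrix n E p = mat n n (\<lambda>(i,j).
      if E i j then (real (degree n E i) powr p + real (degree n E j) powr p) powr (1/p) else 0)"

(* largest (real) eigenvalue; the matrix is real symmetric so all eigenvalues are real *)
definition rho :: "real mat \<Rightarrow> real" where
  "rho A = Max {k. eigenvalue A k}"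

(* Diamond on vertices u = 0, v = 1 (adjacent, degree 3), a = 2, b = 3 (nonadjacent). *)
definition diamond_edge :: "nat \<Rightarrow> nat \<Rightarrow> bool" where
  "diamond_edge i j = ({i,j} \<in> {{0,1},{0,2},{0,3},{1,2},{1,3}})"

(* B3: diamond, n-5 pendant vertices 5..n-1 attached to u = 0,
   one pendant vertex 4 attached to v = 1. *)
definition B3_edge :: "nat \<Rightarrow> nat \<Rightarrow> bool" where
  "B3_edge i j = (diamond_edge i j \<or> {i,j} = {1,4} \<or>
      (\<exists>k. 5 \<le> k \<and> {i,j} = {0,k}))"

(* B4: diamond, n-4 pendant vertices 4..n-1 attached to a = 2. *)
definition B4_edge :: "nat \<Rightarrow> nat \<Rightarrow> bool" where
  "B4_edge i j = (diamond_edge i j \<or> (\<exists>k. 4 \<le> k \<and> {i,j} = {2,k}))"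

end

theory Submission
  imports Defs
begin


definition sp :: "real \<Rightarrow> real \<Rightarrow> real \<Rightarrow> real" where
  "sp p x y = (x powr p + y powr p) powr (1/p)"

lemma sp_sym: "sp p x y = sp p y x"
  unfolding sp_def by (simp add: add.commute)

lemma sp_pos: assumes "x > 0" "y > 0" shows "sp p x y > 0"
proof -
  have "x powr p + y powr p > 0" using assms by (intro add_pos_pos) auto
  thus ?thesis unfolding sp_def by simp
qed

lemma sp_pow: assumes "x > 0" "y > 0" "p > 0" shows "sp p x y powr p = x powr p + y powr p"
proof -
  have "x powr p + y powr p > 0" using assms by (intro add_pos_pos) auto
  thus ?thesis unfolding sp_def using assms by (simp add: powr_powr)
qed

lemma sp_ge1: assumes "x > 0" "y > 0" "p > 0" shows "x \<le> sp p x y"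
proof -
  have "x = (x powr p) powr (1/p)" using assms by (simp add: powr_powr)
  also have "\<dots> \<le> (x powr p + y powr p) powr (1/p)"
    by (rule powr_mono2) (use assms in auto)
  finally show ?thesis unfolding sp_def .
qed

lemma sp_ge2: assumes "x > 0" "y > 0" "p > 0" shows "y \<le> sp p x y"
  using sp_ge1[OF assms(2,1,3)] by (simp add: sp_sym)

lemma sp_mono: assumes "x > 0" "y > 0" "0 < p" "p \<le> q" shows "sp q x y \<le> sp p x y"
proof -
  define N where "N = sp p x y"
  have N: "N > 0" using sp_pos assms N_def by auto
  have xN: "x / N \<le> 1" "y / N \<le> 1" using sp_ge1[of x y p] sp_ge2[of x y p] assms N N_def by auto
  have "(x/N) powr q \<le> (x/N) powr p" by (rule powr_mono') (use assms xN N in auto)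
  moreover have "(y/N) powr q \<le> (y/N) powr p" by (rule powr_mono') (use assms xN N in auto)
  moreover have "(x/N) powr p + (y/N) powr p = 1"
  proof -
    have "x powr p + y powr p > 0" using assms by (intro add_pos_pos) auto
    thus ?thesis using sp_pow[of x y p] assms N unfolding N_def[symmetric]
      by (simp add: powr_divide divide_simps)
  qed
  ultimately have "(x/N) powr q + (y/N) powr q \<le> 1" by linarith
  hence h: "x powr q + y powr q \<le> N powr q" using N assms
    by (simp add: powr_divide divide_simps)
  have "(x powr q + y powr q) powr (1/q) \<le> (N powr q) powr (1/q)"
    by (rule powr_mono2) (use assms h in auto)
  also have "\<dots> = N" using N assms by (simp add: powr_powr)
  finally show ?thesis unfolding sp_def N_def .
qed

lemma sp_nat: assumes "x > 0" "y > 0" "m > 0" shows "sp (real m) x y ^ m = x ^ m + y ^ m"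
proof -
  have "sp (real m) x y ^ m = sp (real m) x y powr (real m)"
    using sp_pos[OF assms(1,2)] by (simp add: powr_realpow)
  also have "\<dots> = x powr (real m) + y powr (real m)" by (rule sp_pow) (use assms in auto)
  finally show ?thesis using assms by (simp add: powr_realpow)
qed

lemma sp_sq_le: assumes "x > 0" "y > 0" "p \<ge> 2" shows "sp p x y ^ 2 \<le> x^2 + y^2"
proof -
  have "sp p x y \<le> sp (real 2) x y" using sp_mono[OF assms(1,2), of "real 2" p] assms by auto
  hence "sp p x y ^ 2 \<le> sp (real 2) x y ^ 2"
    using less_imp_le[OF sp_pos[OF assms(1,2)]] by (intro power_mono) auto
  thus ?thesis using sp_nat[OF assms(1,2), of 2] by simp
qed

lemma sp_cube_le: assumes "x > 0" "y > 0" "p \<ge> 3" shows "sp p x y ^ 3 \<le> x^3 + y^3"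
proof -
  have "sp p x y \<le> sp (real 3) x y" using sp_mono[OF assms(1,2), of "real 3" p] assms by auto
  hence "sp p x y ^ 3 \<le> sp (real 3) x y ^ 3"
    using less_imp_le[OF sp_pos[OF assms(1,2)]] by (intro power_mono) auto
  thus ?thesis using sp_nat[OF assms(1,2), of 3] by simp
qed

lemma sp_cube_ge: assumes "x > 0" "y > 0" "p > 0" "p \<le> 3" shows "x^3 + y^3 \<le> sp p x y ^ 3"
proof -
  have "sp (real 3) x y \<le> sp p x y" using sp_mono[OF assms(1,2), of p "real 3"] assms by auto
  hence "sp (real 3) x y ^ 3 \<le> sp p x y ^ 3"
    using less_imp_le[OF sp_pos[OF assms(1,2)]] by (intro power_mono) auto
  thus ?thesis using sp_nat[OF assms(1,2), of 3] by simp
qed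

lemma sp_deriv:
  assumes "D > 0" "k > 0" "p > 0"
  shows "DERIV (\<lambda>k. sp p D k) k :> (1/p) * (D powr p + k powr p) powr (1/p - 1) * (p * k powr (p - 1))"
proof -
  have g: "DERIV (\<lambda>k. D powr p + k powr p) k :> p * k powr (p - 1)"
    using assms by (auto intro!: derivative_eq_intros)
  have pos: "D powr p + k powr p > 0" using assms by (intro add_pos_pos) auto
  show ?thesis unfolding sp_def using DERIV_fun_powr[OF g pos, of "1/p"] by simp
qed

lemma sp_deriv_mono:
  fixes D x y p :: real
  assumes "D > 0" "0 < x" "x \<le> y" "p \<ge> 1"
  shows "(1/p) * (D powr p + x powr p) powr (1/p - 1) * (p * x powr (p - 1))
       \<le> (1/p) * (D powr p + y powr p) powr (1/p - 1) * (p * y powr (p - 1))"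
proof -
  have y: "y > 0" using assms(2,3) by linarith
  define e where "e = (p - 1) / p"
  have e: "e \<ge> 0" using assms unfolding e_def by auto
  have key: "\<And>k. k > 0 \<Longrightarrow> (1/p) * (D powr p + k powr p) powr (1/p - 1) * (p * k powr (p - 1))
        = (k powr p / (D powr p + k powr p)) powr e"
  proof -
    fix k :: real assume k: "k > 0"
    have S: "D powr p + k powr p > 0" using assms k by (intro add_pos_pos) auto
    have "(k powr p / (D powr p + k powr p)) powr e = (k powr p) powr e / (D powr p + k powr p) powr e"
      by (simp add: powr_divide)
    also have "(k powr p) powr e = k powr (p - 1)" using assms unfolding e_def by (simp add: powr_powr)
    also have "(D powr p + k powr p) powr e = inverse ((D powr p + k powr p) powr (1/p - 1))"
    proof -
      have "1/p - 1 + e = 0" using assms unfolding e_def by (simp add: field_simps)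
      hence "(D powr p + k powr p) powr (1/p - 1) * (D powr p + k powr p) powr e = 1"
        using S by (simp add: powr_add[symmetric])
      thus ?thesis using S by (simp add: field_simps)
    qed
    finally show "(1/p) * (D powr p + k powr p) powr (1/p - 1) * (p * k powr (p - 1))
        = (k powr p / (D powr p + k powr p)) powr e" using assms by (simp add: field_simps)
  qed
  have "x powr p / (D powr p + x powr p) \<le> y powr p / (D powr p + y powr p)"
  proof -
    have Sx: "D powr p + x powr p > 0" "D powr p + y powr p > 0" using assms y by (auto intro!: add_pos_pos)
    have "x powr p \<le> y powr p" using assms by (intro powr_mono2) auto
    hence "x powr p * D powr p \<le> y powr p * D powr p" using assms by (intro mult_right_mono) auto
    thus ?thesis using Sx by (simp add: divide_simps algebra_simps)
  qed
  hence "(x powr p / (D powr p + x powr p)) powr e \<le> (y powr p / (D powr p + y powr p)) powr e"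
    using e assms by (intro powr_mono2) auto
  thus ?thesis using key[of x] key[of y] assms y by simp
qed

lemma sp_convex:
  assumes "D > 0" "p \<ge> 1"
  shows "2 * sp p D 3 \<le> sp p D 2 + sp p D 4"
proof -
  define f' where "f' k = (1/p) * (D powr p + k powr p) powr (1/p - 1) * (p * k powr (p - 1))" for k
  have d: "\<And>k. k > 0 \<Longrightarrow> DERIV (\<lambda>k. sp p D k) k :> f' k"
    unfolding f'_def using sp_deriv assms by auto
  obtain z1 where z1: "2 < z1" "z1 < 3" "sp p D 3 - sp p D 2 = (3 - 2) * f' z1"
    using MVT2[of 2 3 "\<lambda>k. sp p D k" f'] d by force
  obtain z2 where z2: "3 < z2" "z2 < 4" "sp p D 4 - sp p D 3 = (4 - 3) * f' z2"
    using MVT2[of 3 4 "\<lambda>k. sp p D k" f'] d by force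
  have "f' z1 \<le> f' z2" unfolding f'_def by (rule sp_deriv_mono) (use assms z1 z2 in auto)
  thus ?thesis using z1 z2 by simp
qed


definition E4 :: "real \<Rightarrow> real \<Rightarrow> real" where
  "E4 p t = t^2 - sp p 3 3 * t - 2 * (sp p 3 2)^2"
definition H4 :: "real \<Rightarrow> real \<Rightarrow> real \<Rightarrow> real" where
  "H4 D p t = t^2 - (D - 2) * (sp p D 1)^2 - 2 * (sp p D 3)^2 * t^2 / E4 p t"
definition E3 :: "real \<Rightarrow> real \<Rightarrow> real" where
  "E3 p t = t^2 - 2 * (sp p 4 2)^2 - (sp p 4 1)^2"
definition G3 :: "real \<Rightarrow> real \<Rightarrow> real \<Rightarrow> real" where
  "G3 D p t = t^2 - (D - 3) * (sp p D 1)^2 - 2 * (sp p D 2)^2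
     - (t * sp p D 4 + 2 * sp p D 2 * sp p 4 2)^2 / E3 p t"

lemma b_bounds:
  assumes "p \<ge> 2"
  shows "3 \<le> sp p 3 3" "sp p 3 3 \<le> 4243/1000" "3 \<le> sp p 3 2" "(sp p 3 2)^2 \<le> 13"
        "4 \<le> sp p 4 2" "(sp p 4 2)^2 \<le> 20" "4 \<le> sp p 4 1" "(sp p 4 1)^2 \<le> 17"
proof -
  have p: "p > 0" using assms by simp
  show "3 \<le> sp p 3 3" by (rule sp_ge1) (use p in auto)
  show "3 \<le> sp p 3 2" by (rule sp_ge1) (use p in auto)
  show "4 \<le> sp p 4 2" by (rule sp_ge1) (use p in auto)
  show "4 \<le> sp p 4 1" by (rule sp_ge1) (use p in auto)
  have "(sp p 3 3)^2 \<le> 3^2 + 3^2" by (rule sp_sq_le) (use assms in auto)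
  hence "(sp p 3 3)^2 \<le> (4243/1000)^2" by (simp add: power2_eq_square)
  thus "sp p 3 3 \<le> 4243/1000" by (rule power2_le_imp_le) simp
  have "(sp p 3 2)^2 \<le> 3^2 + 2^2" by (rule sp_sq_le) (use assms in auto)
  thus "(sp p 3 2)^2 \<le> 13" by simp
  have "(sp p 4 2)^2 \<le> 4^2 + 2^2" by (rule sp_sq_le) (use assms in auto)
  thus "(sp p 4 2)^2 \<le> 20" by simp
  have "(sp p 4 1)^2 \<le> 4^2 + 1^2" by (rule sp_sq_le) (use assms in auto)
  thus "(sp p 4 1)^2 \<le> 17" by simp
qed

lemma a_bounds:
  assumes "p \<ge> 2" "D > 0" "k > 0"
  shows "D \<le> sp p D k" "k \<le> sp p D k" "(sp p D k)^2 \<le> D^2 + k^2"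
proof -
  show "D \<le> sp p D k" by (rule sp_ge1) (use assms in auto)
  show "k \<le> sp p D k" by (rule sp_ge2) (use assms in auto)
  show "(sp p D k)^2 \<le> D^2 + k^2" by (rule sp_sq_le) (use assms in auto)
qed

lemma E4_pos: assumes "p \<ge> 2" "t \<ge> 8" shows "E4 p t > 0" "E4 p t \<le> t^2"
proof -
  note b = b_bounds[OF assms(1)]
  have "t * (t - sp p 3 3) \<ge> 8 * (8 - sp p 3 3)"
    using b assms by (intro mult_mono) auto
  moreover have "8 * (8 - sp p 3 3) > 2 * 13" using b(2) by (simp add: algebra_simps)
  ultimately show "E4 p t > 0" using b unfolding E4_def by (simp add: power2_eq_square algebra_simps)
  have "sp p 3 3 * t \<ge> 0" using b assms by simp
  moreover have "(sp p 3 2)^2 \<ge> 0" by simp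
  ultimately show "E4 p t \<le> t^2" unfolding E4_def by linarith
qed

lemma E3_pos: assumes "p \<ge> 2" "t \<ge> 8" shows "E3 p t > 0" "E3 p t \<le> t^2 - 48"
proof -
  note b = b_bounds[OF assms(1)]
  have "t^2 \<ge> 8^2" using assms by (intro power_mono) auto
  hence "t^2 \<ge> 64" by simp
  thus "E3 p t > 0" using b(6,8) unfolding E3_def by linarith
  have "(sp p 4 2)^2 \<ge> 4^2" using b by (intro power_mono) auto
  moreover have "(sp p 4 1)^2 \<ge> 4^2" using b by (intro power_mono) auto
  ultimately show "E3 p t \<le> t^2 - 48" unfolding E3_def by simp
qed

lemma poly_G3:
  fixes D :: real assumes "D \<ge> 4"
  shows "(D^4 - D^3 + D^2 - D - 5)*(D^4 - 57) - (4*D^6 + 160*D^2 + 640) > 0"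
proof -
  define e where "e = D - 4"
  have e: "e \<ge> 0" and D: "D = 4 + e" using assms unfolding e_def by auto
  have "(D^4 - D^3 + D^2 - D - 5)*(D^4 - 57) - (4*D^6 + 160*D^2 + 640)
     = 20017 + e*(67873 + e*(75539 + e*(43449 + e*(14878 + e*(3175 + e*(417 + e*(31 + e)))))))"
    unfolding D by (simp add: power_numeral_reduce algebra_simps)
  also have "\<dots> > 0" using e by (intro add_pos_nonneg mult_nonneg_nonneg add_nonneg_nonneg) auto
  finally show ?thesis .
qed
lemma poly_H4:
  fixes D :: real assumes "D \<ge> 8"
  shows "D^4 - (D-2)*(D^2+1) - 4*D^2 - 36 > 0"
proof -
  define e where "e = D - 8"
  have e: "e \<ge> 0" and D: "D = 8 + e" using assms unfolding e_def by auto
  have "D^4 - (D-2)*(D^2+1) - 4*D^2 - 36 = 3414 + e*(1823 + e*(358 + e*(31 + e)))"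
    unfolding D by (simp add: power_numeral_reduce algebra_simps)
  also have "\<dots> > 0" using e by (intro add_pos_nonneg mult_nonneg_nonneg add_nonneg_nonneg) auto
  finally show ?thesis .
qed
lemma poly_cubic:
  fixes t :: real assumes "t \<ge> 22"
  shows "2*(73/64)*(4243/1000*t + 26)*(t^2 - 48) < (16*t + 48)*(t^2 - 4243/1000*t - 26)"
proof -
  define e where "e = t - 22"
  have e: "e \<ge> 0" and t: "t = 22 + e" using assms unfolding e_def by auto
  have "(16*t + 48)*(t^2 - 4243/1000*t - 26) - 2*(73/64)*(4243/1000*t + 26)*(t^2 - 48)
     = 108628339/4000 + e*(44301723/8000 + e*(1081481/3200 + e*(202261/32000)))"
    unfolding t by (simp add: power_numeral_reduce field_simps)
  also have "\<dots> > 0" using e by (intro add_pos_nonneg mult_nonneg_nonneg add_nonneg_nonneg) auto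
  finally show ?thesis by simp
qed

lemma frac_ge_self: fixes x e t :: real assumes "0 < e" "e \<le> t^2" "x \<ge> 0" shows "x \<le> x * t^2 / e"
proof -
  have "x * e \<le> x * t^2" using assms by (intro mult_left_mono) auto
  thus ?thesis using assms by (simp add: divide_simps)
qed

lemma H4_at8: assumes "p \<ge> 2" "D \<ge> 4" shows "H4 D p 8 \<le> 0"
proof -
  have a1: "D \<le> sp p D 1" and a3: "D \<le> sp p D 3" using a_bounds[OF assms(1)] assms by auto
  have "(sp p D 1)^2 \<ge> 4^2" using a1 assms by (intro power_mono) auto
  hence "(D - 2) * (sp p D 1)^2 \<ge> 2 * 4^2" using assms by (intro mult_mono) auto
  moreover have "(sp p D 3)^2 \<ge> 4^2" using a3 assms by (intro power_mono) auto
  moreover have "(sp p D 3)^2 \<le> (sp p D 3)^2 * 8^2 / E4 p 8"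
    by (rule frac_ge_self) (use E4_pos[OF assms(1), of 8] in auto)
  ultimately show ?thesis unfolding H4_def by (simp add: power2_eq_square)
qed

lemma H4_root_sq: assumes "p \<ge> 2" "D \<ge> 4" "t \<ge> 8" "H4 D p t = 0" shows "t^2 \<ge> D^3"
proof -
  have a1: "D \<le> sp p D 1" and a3: "D \<le> sp p D 3" using a_bounds[OF assms(1)] assms by auto
  have "(sp p D 1)^2 \<ge> D^2" using a1 assms by (intro power_mono) auto
  hence "(D - 2) * (sp p D 1)^2 \<ge> (D - 2) * D^2" using assms by (intro mult_left_mono) auto
  moreover have "(sp p D 3)^2 \<ge> D^2" using a3 assms by (intro power_mono) auto
  moreover have "(sp p D 3)^2 \<le> (sp p D 3)^2 * t^2 / E4 p t"
    by (rule frac_ge_self) (use E4_pos[OF assms(1,3)] in auto)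
  ultimately have "t^2 \<ge> (D - 2) * D^2 + 2 * D^2" using assms(4) unfolding H4_def by simp
  thus ?thesis by (simp add: power2_eq_square power3_eq_cube algebra_simps)
qed

lemma H4_cont: assumes "p \<ge> 2" "t \<ge> 8" shows "isCont (H4 D p) t"
proof -
  have "E4 p t \<noteq> 0" using E4_pos[OF assms] by simp
  thus ?thesis unfolding H4_def[abs_def] E4_def by (intro continuous_intros) auto
qed

lemma G3_cont: assumes "p \<ge> 2" "t \<ge> 8" shows "isCont (G3 D p) t"
proof -
  have "E3 p t \<noteq> 0" using E3_pos[OF assms] by simp
  thus ?thesis unfolding G3_def[abs_def] E3_def by (intro continuous_intros) auto
qed


lemma sp_mono_arg: assumes "x > 0" "0 < y" "y \<le> z" "p > 0" shows "sp p x y \<le> sp p x z"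
proof -
  have "y powr p \<le> z powr p" using assms by (intro powr_mono2) auto
  hence "x powr p + y powr p \<le> x powr p + z powr p" by simp
  thus ?thesis unfolding sp_def using assms
    by (intro powr_mono2) (auto intro!: add_nonneg_nonneg)
qed

lemma F1_nonneg: assumes "p \<ge> 2" "D > 0"
  shows "(sp p D 1)^2 + 2 * (sp p D 3)^2 \<le> (sp p D 4)^2 + 2 * (sp p D 2)^2"
proof -
  have c: "2 * sp p D 3 \<le> sp p D 2 + sp p D 4" by (rule sp_convex) (use assms in auto)
  have "0 \<le> sp p D 3" using sp_pos[of D 3 p] assms by simp
  hence "(2 * sp p D 3)^2 \<le> (sp p D 2 + sp p D 4)^2" using c by (intro power_mono) auto
  moreover have "(sp p D 2 + sp p D 4)^2 \<le> 2 * (sp p D 2)^2 + 2 * (sp p D 4)^2"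
    using sum_squares_ge_zero[of "sp p D 2 - sp p D 4" 0] by (simp add: power2_eq_square algebra_simps)
  moreover have "sp p D 1 \<le> sp p D 2" by (rule sp_mono_arg) (use assms in auto)
  hence "(sp p D 1)^2 \<le> (sp p D 2)^2" using sp_pos[of D 1 p] assms by (intro power_mono) auto
  ultimately show ?thesis by (simp add: power2_eq_square)
qed

lemma sq_sum_le: fixes u v :: real shows "(u + v)^2 \<le> 2*u^2 + 2*v^2"
proof -
  have "0 \<le> (u - v)^2" by simp
  thus ?thesis by (simp add: power2_eq_square algebra_simps)
qed

lemma G3_big: assumes "p \<ge> 2" "D \<ge> 4" shows "G3 D p (D^2) > 0"
proof -
  note b = b_bounds[OF assms(1)]
  have Dp: "D > 0" using assms by simp
  have a1: "(sp p D 1)^2 \<le> D^2 + 1" using a_bounds(3)[OF assms(1) Dp, of 1] by simp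
  have a2: "(sp p D 2)^2 \<le> D^2 + 4" using a_bounds(3)[OF assms(1) Dp, of 2] by simp
  have a4: "(sp p D 4)^2 \<le> D^2 + 16" using a_bounds(3)[OF assms(1) Dp, of 4] by simp
  have a2p: "sp p D 2 \<ge> 0" and a4p: "sp p D 4 \<ge> 0" and b42p: "sp p 4 2 \<ge> 0"
    using sp_pos[of D 2 p] sp_pos[of D 4 p] sp_pos[of 4 2 p] Dp by auto
  have "D^2 \<ge> 4^2" using assms by (intro power_mono) auto
  hence D2: "D^2 \<ge> 16" by simp
  define X where "X = D^2 * sp p D 4 + 2 * sp p D 2 * sp p 4 2"
  have "X^2 \<le> 2 * (D^2 * sp p D 4)^2 + 2 * (2 * sp p D 2 * sp p 4 2)^2"
    unfolding X_def by (rule sq_sum_le)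
  also have "\<dots> = 2 * D^4 * (sp p D 4)^2 + 8 * (sp p D 2)^2 * (sp p 4 2)^2"
    by (simp add: power_mult_distrib power2_eq_square power4_eq_xxxx algebra_simps)
  also have "\<dots> \<le> 2 * D^4 * (2 * D^2) + 8 * (D^2 + 4) * 20"
  proof (intro add_mono mult_left_mono mult_mono)
    show "(sp p D 4)^2 \<le> 2 * D^2" using a4 D2 by simp
  qed (use a2 b(6) in auto)
  finally have X2: "X^2 \<le> 4 * D^6 + 160 * D^2 + 640"
    by (simp add: power_numeral_reduce algebra_simps)
  have T8: "D^2 \<ge> 8" using D2 by simp
  have e3: "E3 p (D^2) > 0" "E3 p (D^2) \<ge> D^4 - 57"
    using E3_pos[OF assms(1) T8] b(6,8) unfolding E3_def by (auto simp: power_numeral_reduce)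
  have "D^2 * D^2 \<ge> 16 * 16" using D2 by (intro mult_mono) auto
  hence "D^4 \<ge> 256" by (simp add: power4_eq_xxxx power2_eq_square)
  hence "D^4 - 57 > 0" by simp
  have frac: "X^2 / E3 p (D^2) \<le> (4 * D^6 + 160 * D^2 + 640) / (D^4 - 57)"
    by (rule frac_le) (use X2 e3 \<open>D^4 - 57 > 0\<close> in auto)
  have P: "(D^4 - D^3 + D^2 - D - 5)*(D^4 - 57) - (4*D^6 + 160*D^2 + 640) > 0" by (rule poly_G3) fact
  hence "(4 * D^6 + 160 * D^2 + 640) / (D^4 - 57) < D^4 - D^3 + D^2 - D - 5"
    using \<open>D^4 - 57 > 0\<close> by (simp add: divide_simps)
  moreover have "(D - 3) * (sp p D 1)^2 \<le> (D - 3) * (D^2 + 1)" using a1 assms by (intro mult_left_mono) auto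
  ultimately have "D^4 - (D - 3) * (sp p D 1)^2 - 2 * (sp p D 2)^2 - X^2 / E3 p (D^2) > 0"
    using frac a2 by (simp add: power_numeral_reduce algebra_simps)
  thus ?thesis unfolding G3_def X_def by (simp add: power_numeral_reduce)
qed


lemma H4_big: assumes "p \<ge> 2" "D \<ge> 8" shows "H4 D p (D^2) > 0"
proof -
  note b = b_bounds[OF assms(1)]
  have Dp: "D > 0" using assms by simp
  have a1: "(sp p D 1)^2 \<le> D^2 + 1" using a_bounds(3)[OF assms(1) Dp, of 1] by simp
  have a3: "(sp p D 3)^2 \<le> D^2 + 9" using a_bounds(3)[OF assms(1) Dp, of 3] by simp
  have "D^2 \<ge> 8^2" using assms by (intro power_mono) auto
  hence T: "D^2 \<ge> 64" by simp
  define T where "T = D^2"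
  have T64: "T \<ge> 64" using T T_def by simp
  have "T * T \<ge> 64 * T" using T64 by (intro mult_right_mono) auto
  have "sp p 3 3 * T \<le> 4243/1000 * T" using b(2) T64 by (intro mult_right_mono) auto
  have e4: "E4 p T \<ge> T^2 / 2"
    using \<open>T * T \<ge> 64 * T\<close> \<open>sp p 3 3 * T \<le> 4243/1000 * T\<close> b(4) T64
    unfolding E4_def power2_eq_square by linarith
  have e4p: "T^2 / 2 > 0" using T64 by simp
  have "2 * (sp p D 3)^2 * T^2 / E4 p T \<le> 2 * (sp p D 3)^2 * T^2 / (T^2 / 2)"
  proof (rule divide_left_mono)
    have "E4 p T > 0" using e4 e4p by linarith
    thus "0 < E4 p T * (T^2 / 2)" using e4p by simp
  qed (use e4 in auto)
  also have "\<dots> = 4 * (sp p D 3)^2" using e4p by (simp add: field_simps)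
  finally have f: "2 * (sp p D 3)^2 * T^2 / E4 p T \<le> 4 * (D^2 + 9)" using a3 by simp
  have "(D - 2) * (sp p D 1)^2 \<le> (D - 2) * (D^2 + 1)" using a1 assms by (intro mult_left_mono) auto
  moreover have "D^4 - (D-2)*(D^2+1) - 4*D^2 - 36 > 0" by (rule poly_H4) fact
  moreover have "T^2 = D^4" unfolding T_def by (simp add: power4_eq_xxxx power2_eq_square)
  ultimately show ?thesis using f unfolding H4_def T_def[symmetric] by (smt (verit))
qed

lemma coupled:
  assumes p: "p \<ge> 2" and D: "D \<ge> 8" and t: "t \<ge> 8" and h: "H4 D p t = 0"
  shows "G3 D p t < 0"
proof -
  note b = b_bounds[OF p]
  have Dp: "D > 0" using D by simp
  define a1 where "a1 = sp p D 1"
  define a2 where "a2 = sp p D 2"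
  define a3 where "a3 = sp p D 3"
  define a4 where "a4 = sp p D 4"
  define b42 where "b42 = sp p 4 2"
  define b41 where "b41 = sp p 4 1"
  define b33 where "b33 = sp p 3 3"
  define b32 where "b32 = sp p 3 2"
  define e3 where "e3 = E3 p t"
  define e4 where "e4 = E4 p t"
  define X where "X = t * a4 + 2 * a2 * b42"
  have e3p: "e3 > 0" "e3 \<le> t^2 - 48" using E3_pos[OF p t] unfolding e3_def by auto
  have e4p: "e4 > 0" using E4_pos[OF p t] unfolding e4_def by auto
  have e3d: "e3 = t^2 - 2 * b42^2 - b41^2" unfolding e3_def E3_def a1_def b42_def b41_def by simp
  have e4d: "e4 = t^2 - b33 * t - 2 * b32^2" unfolding e4_def E4_def b33_def b32_def by simp
  have D3: "t^2 \<ge> D^3" by (rule H4_root_sq[OF p _ t h]) (use D in auto)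
  have "D^3 \<ge> 8^3" using D by (intro power_mono) auto
  hence t2: "t^2 \<ge> 512" using D3 by simp
  have t22: "t \<ge> 22"
  proof (rule ccontr)
    assume "\<not> t \<ge> 22"
    hence "t^2 < 22^2" using t by (intro power_strict_mono) auto
    thus False using t2 by simp
  qed
  have pos: "a1 > 0" "a2 > 0" "a3 > 0" "a4 > 0" "b42 > 0" "b41 > 0" "b33 > 0" "b32 > 0"
    unfolding a1_def a2_def a3_def a4_def b42_def b41_def b33_def b32_def
    using Dp by (auto intro!: sp_pos)
  have aD: "D \<le> a2" "D \<le> a4" unfolding a2_def a4_def using a_bounds(1)[OF p Dp] by auto
  have a3u: "a3^2 \<le> D^2 + 9" unfolding a3_def using a_bounds(3)[OF p Dp, of 3] by simp
  have "D^2 \<ge> 8^2" using D by (intro power_mono) auto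
  hence a3u': "a3^2 \<le> (73/64) * D^2" using a3u by simp
  have F1: "a1^2 + 2 * a3^2 \<le> a4^2 + 2 * a2^2"
    unfolding a1_def a2_def a3_def a4_def by (rule F1_nonneg[OF p Dp])
  have Hx: "t^2 - (D - 2) * a1^2 = 2 * a3^2 * t^2 / e4"
    using h unfolding H4_def a1_def a3_def e4_def by simp
  have G: "G3 D p t = t^2 - (D - 3) * a1^2 - 2 * a2^2 - X^2 / e3"
    unfolding G3_def a1_def a2_def a4_def b42_def e3_def X_def by simp
  define N1 where "N1 = X^2 - a4^2 * e3"
  define N2 where "N2 = 2 * a3^2 * (b33 * t + 2 * b32^2)"
  have s1: "X^2 / e3 = a4^2 + N1 / e3" unfolding N1_def using e3p by (simp add: field_simps)
  have "2 * a3^2 * t^2 = 2 * a3^2 * e4 + N2" unfolding N2_def e4d by (simp add: algebra_simps)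
  hence s2: "2 * a3^2 * t^2 / e4 = 2 * a3^2 + N2 / e4" using e4p by (simp add: field_simps)
  have N1e: "N1 = 4 * t * (a4 * a2 * b42) + 4 * a2^2 * b42^2 + a4^2 * (2 * b42^2 + b41^2)"
    unfolding N1_def X_def e3d by (simp add: power2_eq_square algebra_simps)
  have "a4 * a2 * b42 \<ge> D * D * 4"
    using aD b(5) pos Dp unfolding b42_def by (intro mult_mono) (auto simp: b42_def)
  moreover have "a4^2 \<ge> D^2" using aD Dp by (intro power_mono) auto
  moreover have "2 * b42^2 + b41^2 \<ge> 48"
  proof -
    have "b42^2 \<ge> 4^2" "b41^2 \<ge> 4^2" using b(5,7) unfolding b42_def b41_def by (intro power_mono; simp)+
    thus ?thesis by simp
  qed
  ultimately have "a4^2 * (2 * b42^2 + b41^2) \<ge> D^2 * 48"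
    by (intro mult_mono) auto
  moreover have "4 * t * (a4 * a2 * b42) \<ge> 4 * t * (D * D * 4)"
    using \<open>a4 * a2 * b42 \<ge> D * D * 4\<close> t by (intro mult_left_mono) auto
  moreover have "4 * a2^2 * b42^2 \<ge> 0" by simp
  moreover have "D^2 * (16 * t + 48) = 4 * t * (D * D * 4) + D^2 * 48"
    by (simp add: power2_eq_square algebra_simps)
  ultimately have N1l: "N1 \<ge> D^2 * (16 * t + 48)" unfolding N1e by linarith
  have "b33 * t + 2 * b32^2 \<le> 4243/1000 * t + 26"
    using b(2,4) t unfolding b33_def b32_def by (smt (verit) mult_right_mono)
  hence N2u: "N2 \<le> 2 * ((73/64) * D^2) * (4243/1000 * t + 26)"
    unfolding N2_def using a3u' pos t by (intro mult_mono) (auto intro!: add_nonneg_nonneg)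
  have e4l: "e4 \<ge> t^2 - 4243/1000 * t - 26"
    using b(2,4) t unfolding e4d b33_def b32_def by (smt (verit) mult_right_mono)
  have c: "2*(73/64)*(4243/1000*t + 26)*(t^2 - 48) < (16*t + 48)*(t^2 - 4243/1000*t - 26)"
    by (rule poly_cubic) fact
  have "N2 * e3 \<le> (2 * ((73/64) * D^2) * (4243/1000 * t + 26)) * (t^2 - 48)"
    using N2u e3p t by (intro mult_mono) (auto intro!: mult_nonneg_nonneg add_nonneg_nonneg)
  also have "\<dots> = D^2 * (2*(73/64)*(4243/1000*t + 26)*(t^2 - 48))" by (simp add: algebra_simps)
  also have "\<dots> < D^2 * ((16*t + 48)*(t^2 - 4243/1000*t - 26))"
    using c Dp by (intro mult_strict_left_mono) auto
  also have "\<dots> = (D^2 * (16 * t + 48)) * (t^2 - 4243/1000*t - 26)" by (simp add: algebra_simps)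
  also have "\<dots> \<le> N1 * e4"
  proof (rule mult_mono)
    have tt: "t * t \<ge> 22 * t" using t22 t by (intro mult_right_mono) auto
    show "t^2 - 4243/1000*t - 26 \<ge> 0" using tt t22 unfolding power2_eq_square by linarith
  next
    have "D^2 * (16 * t + 48) \<ge> 0" using t by simp
    thus "0 \<le> N1" using N1l by linarith
  qed (use N1l e4l in auto)
  finally have "N2 * e3 < N1 * e4" .
  hence "N2 / e4 < N1 / e3" using e3p e4p by (simp add: divide_simps)
  hence "G3 D p t < 0"
  proof -
    have "(D - 3) * a1^2 = (D - 2) * a1^2 - a1^2" by (simp add: algebra_simps)
    thus ?thesis using G Hx s1 s2 F1 \<open>N2 / e4 < N1 / e3\<close> by linarith
  qed
  thus ?thesis .
qed


lemma H4_pos_gen: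
  assumes p: "p \<ge> 2" and D: "D \<ge> 4" and M: "M \<ge> 8"
    and a1: "(sp p D 1)^2 \<le> Aa" and a3: "(sp p D 3)^2 \<le> Ab"
    and b33: "sp p 3 3 \<le> Bb" and b32: "(sp p 3 2)^2 \<le> Qq"
    and e0: "0 < M^2 - Bb * M - 2 * Qq"
    and num: "0 < M^2 - (D - 2) * Aa - 2 * Ab * M^2 / (M^2 - Bb * M - 2 * Qq)"
  shows "H4 D p M > 0"
proof -
  have "sp p 3 3 * M \<le> Bb * M" using b33 M by (intro mult_right_mono) auto
  hence e: "M^2 - Bb * M - 2 * Qq \<le> E4 p M" using b32 unfolding E4_def by linarith
  have "2 * (sp p D 3)^2 * M^2 / E4 p M \<le> 2 * Ab * M^2 / (M^2 - Bb * M - 2 * Qq)"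
  proof (rule frac_le)
    show "2 * (sp p D 3)^2 * M^2 \<le> 2 * Ab * M^2" using a3 by (intro mult_right_mono) auto
    show "0 \<le> 2 * Ab * M^2" using a3 by (intro mult_nonneg_nonneg) (auto intro: order_trans[OF zero_le_power2])
  qed (use e e0 in auto)
  moreover have "(D - 2) * (sp p D 1)^2 \<le> (D - 2) * Aa" using a1 D by (intro mult_left_mono) auto
  ultimately show ?thesis using num unfolding H4_def by linarith
qed

lemma G3_neg_gen:
  assumes p: "p \<ge> 2" and D: "D \<ge> 4" and M: "M \<ge> 8"
    and l1: "L1 \<le> sp p D 1" and l2: "L2 \<le> sp p D 2" and l4: "L4 \<le> sp p D 4"
    and l42: "L42 \<le> sp p 4 2" and l41: "L41 \<le> sp p 4 1"
    and nn: "0 \<le> L1" "0 \<le> L2" "0 \<le> L4" "0 \<le> L42" "0 \<le> L41"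
    and e1: "0 < M^2 - 2 * L42^2 - L41^2"
    and num: "M^2 - (D - 3) * L1^2 - 2 * L2^2 - (M * L4 + 2 * L2 * L42)^2 / (M^2 - 2 * L42^2 - L41^2) < 0"
  shows "G3 D p M < 0"
proof -
  have "L42^2 \<le> (sp p 4 2)^2" using l42 nn by (intro power_mono) auto
  moreover have "L41^2 \<le> (sp p 4 1)^2" using l41 nn by (intro power_mono) auto
  ultimately have e: "E3 p M \<le> M^2 - 2 * L42^2 - L41^2" unfolding E3_def by linarith
  have E: "E3 p M > 0" using E3_pos[OF p M] by simp
  have "M * L4 \<le> M * sp p D 4" using l4 M by (intro mult_left_mono) auto
  moreover have "L2 * L42 \<le> sp p D 2 * sp p 4 2" using l2 l42 nn by (intro mult_mono) auto
  ultimately have Y: "M * L4 + 2 * L2 * L42 \<le> M * sp p D 4 + 2 * sp p D 2 * sp p 4 2" by simp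
  have "0 \<le> M * L4 + 2 * L2 * L42" using nn M by simp
  hence sq: "(M * L4 + 2 * L2 * L42)^2 \<le> (M * sp p D 4 + 2 * sp p D 2 * sp p 4 2)^2"
    using Y by (intro power_mono) auto
  have fr: "(M * L4 + 2 * L2 * L42)^2 / (M^2 - 2 * L42^2 - L41^2)
        \<le> (M * sp p D 4 + 2 * sp p D 2 * sp p 4 2)^2 / E3 p M"
    by (rule frac_le) (use e E sq in auto)
  have "L1^2 \<le> (sp p D 1)^2" using l1 nn by (intro power_mono) auto
  hence "(D - 3) * L1^2 \<le> (D - 3) * (sp p D 1)^2" using D by (intro mult_left_mono) auto
  moreover have "L2^2 \<le> (sp p D 2)^2" using l2 nn by (intro power_mono) auto
  ultimately show ?thesis using num fr unfolding G3_def by linarith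
qed

lemma cube_lower: assumes "p \<ge> 2" "p \<le> 3" "x > 0" "y > 0" "L^3 \<le> x^3 + y^3" shows "L \<le> sp p x y"
proof -
  have c: "L^3 \<le> sp p x y ^ 3" using sp_cube_ge[of x y p] assms by simp
  show ?thesis
  proof (rule ccontr)
    assume "\<not> L \<le> sp p x y"
    hence "sp p x y < L" by simp
    hence "sp p x y ^ 3 < L ^ 3" using sp_pos[of x y p] assms
      by (intro power_strict_mono) auto
    thus False using c by simp
  qed
qed

lemma cube_upper: assumes "p \<ge> 3" "U \<ge> 0" "x > 0" "y > 0" "x^3 + y^3 \<le> U^3" shows "sp p x y \<le> U"
proof -
  have c: "sp p x y ^ 3 \<le> U^3" using sp_cube_le[of x y p] assms by simp
  show ?thesis
  proof (rule ccontr)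
    assume "\<not> sp p x y \<le> U"
    hence "U < sp p x y" by simp
    hence "U ^ 3 < sp p x y ^ 3" using assms by (intro power_strict_mono) auto
    thus False using c by simp
  qed
qed

lemma sep:
  assumes p: "p \<ge> 2" and D: "D \<ge> 4" and M: "M \<ge> 8" "M \<le> D^2"
    and h: "H4 D p M > 0" and g: "G3 D p M < 0"
  shows "\<exists>t4 t3. 8 \<le> t4 \<and> t4 < t3 \<and> H4 D p t4 = 0 \<and> G3 D p t3 = 0"
proof -
  obtain t4 where t4: "8 \<le> t4" "t4 \<le> M" "H4 D p t4 = 0"
    using IVT[of "H4 D p" 8 0 M] H4_at8[OF p D] h M H4_cont[OF p] by force
  obtain t3 where t3: "M \<le> t3" "t3 \<le> D^2" "G3 D p t3 = 0"
    using IVT[of "G3 D p" M 0 "D^2"] G3_big[OF p D] g M G3_cont[OF p] by force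
  have "t4 \<noteq> M" using t4 h by auto
  thus ?thesis using t4 t3 by (intro exI[of _ t4] exI[of _ t3]) auto
qed

lemma big_case:
  assumes p: "p \<ge> 2" and D: "D \<ge> 8"
  shows "\<exists>t4 t3. 8 \<le> t4 \<and> t4 < t3 \<and> H4 D p t4 = 0 \<and> G3 D p t3 = 0"
proof -
  have D4: "D \<ge> 4" using D by simp
  have "D^2 \<ge> 8^2" using D by (intro power_mono) auto
  hence T: "D^2 \<ge> 8" by simp
  obtain t4 where t4: "8 \<le> t4" "t4 \<le> D^2" "H4 D p t4 = 0"
    using IVT[of "H4 D p" 8 0 "D^2"] H4_at8[OF p D4] H4_big[OF p D] T H4_cont[OF p] by force
  have g: "G3 D p t4 < 0" by (rule coupled[OF p D t4(1,3)])
  obtain t3 where t3: "t4 \<le> t3" "t3 \<le> D^2" "G3 D p t3 = 0"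
    using IVT[of "G3 D p" t4 0 "D^2"] G3_big[OF p D4] g t4 G3_cont[OF p] by force
  have "t4 \<noteq> t3" using g t3 by auto
  thus ?thesis using t4 t3 by (intro exI[of _ t4] exI[of _ t3]) auto
qed

lemma case_4:
  assumes p: "p \<ge> 2"
  shows "\<exists>t4 t3. 8 \<le> t4 \<and> t4 < t3 \<and> H4 4 p t4 = 0 \<and> G3 4 p t3 = 0"
proof (cases "p \<le> 3")
  case True
  let ?M = "(12 :: real)"
  have "H4 4 p ?M > 0"
  proof (rule H4_pos_gen[OF p, where Bb="4243/1000" and Qq=13])
    show "(sp p 4 1)^2 \<le> 4^2 + 1^2" by (rule a_bounds(3)[OF p]) auto
    show "(sp p 4 3)^2 \<le> 4^2 + 3^2" by (rule a_bounds(3)[OF p]) auto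
  qed (use b_bounds[OF p] in \<open>simp_all add: power2_eq_square\<close>)
  moreover have "G3 4 p ?M < 0"
  proof (rule G3_neg_gen[OF p])
    show "201/50 \<le> sp p 4 1" by (rule cube_lower[OF p True]) (simp_all add: power3_eq_cube)
    show "104/25 \<le> sp p 4 2" by (rule cube_lower[OF p True]) (simp_all add: power3_eq_cube)
    show "5039/1000 \<le> sp p 4 4" by (rule cube_lower[OF p True]) (simp_all add: power3_eq_cube)
    show "104/25 \<le> sp p 4 2" by (rule cube_lower[OF p True]) (simp_all add: power3_eq_cube)
    show "201/50 \<le> sp p 4 1" by (rule cube_lower[OF p True]) (simp_all add: power3_eq_cube)
  qed (simp_all add: power2_eq_square)
  ultimately show ?thesis by (intro sep[OF p]) (simp_all add: power2_eq_square)
next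
  case False
  hence p3: "p \<ge> 3" by simp
  let ?M = "(11 :: real)"
  have "H4 4 p ?M > 0"
  proof (rule H4_pos_gen[OF p])
    have "sp p 4 1 \<le> 4021/1000" by (rule cube_upper[OF p3]) (simp_all add: power3_eq_cube)
    thus "(sp p 4 1)^2 \<le> (4021/1000)^2" using sp_pos[of 4 1 p] by (intro power_mono) auto
    have "sp p 4 3 \<le> 2249/500" by (rule cube_upper[OF p3]) (simp_all add: power3_eq_cube)
    thus "(sp p 4 3)^2 \<le> (2249/500)^2" using sp_pos[of 4 3 p] by (intro power_mono) auto
    show "sp p 3 3 \<le> 189/50" by (rule cube_upper[OF p3]) (simp_all add: power3_eq_cube)
    have "sp p 3 2 \<le> 409/125" by (rule cube_upper[OF p3]) (simp_all add: power3_eq_cube)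
    thus "(sp p 3 2)^2 \<le> (409/125)^2" using sp_pos[of 3 2 p] by (intro power_mono) auto
  qed (simp_all add: power2_eq_square)
  moreover have "G3 4 p ?M < 0"
  proof (rule G3_neg_gen[OF p])
    show "4 \<le> sp p 4 1" "4 \<le> sp p 4 2" "4 \<le> sp p 4 4"
      using a_bounds(1)[OF p, of 4] by auto
    show "4 \<le> sp p 4 2" "4 \<le> sp p 4 1" using b_bounds[OF p] by auto
  qed (simp_all add: power2_eq_square)
  ultimately show ?thesis by (intro sep[OF p]) (simp_all add: power2_eq_square)
qed

lemma case_5:
  assumes p: "p \<ge> 2"
  shows "\<exists>t4 t3. 8 \<le> t4 \<and> t4 < t3 \<and> H4 5 p t4 = 0 \<and> G3 5 p t3 = 0"
proof (cases "p \<le> 3")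
  case True
  let ?M = "(283/20 :: real)"
  have "H4 5 p ?M > 0"
  proof (rule H4_pos_gen[OF p, where Bb="4243/1000" and Qq=13])
    show "(sp p 5 1)^2 \<le> 5^2 + 1^2" by (rule a_bounds(3)[OF p]) auto
    show "(sp p 5 3)^2 \<le> 5^2 + 3^2" by (rule a_bounds(3)[OF p]) auto
  qed (use b_bounds[OF p] in \<open>simp_all add: power2_eq_square\<close>)
  moreover have "G3 5 p ?M < 0"
  proof (rule G3_neg_gen[OF p])
    show "5013/1000 \<le> sp p 5 1" by (rule cube_lower[OF p True]) (simp_all add: power3_eq_cube)
    show "638/125 \<le> sp p 5 2" by (rule cube_lower[OF p True]) (simp_all add: power3_eq_cube)
    show "2869/500 \<le> sp p 5 4" by (rule cube_lower[OF p True]) (simp_all add: power3_eq_cube)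
    show "104/25 \<le> sp p 4 2" by (rule cube_lower[OF p True]) (simp_all add: power3_eq_cube)
    show "201/50 \<le> sp p 4 1" by (rule cube_lower[OF p True]) (simp_all add: power3_eq_cube)
  qed (simp_all add: power2_eq_square)
  ultimately show ?thesis by (intro sep[OF p]) (simp_all add: power2_eq_square)
next
  case False
  hence p3: "p \<ge> 3" by simp
  let ?M = "(67/5 :: real)"
  have "H4 5 p ?M > 0"
  proof (rule H4_pos_gen[OF p])
    have "sp p 5 1 \<le> 2507/500" by (rule cube_upper[OF p3]) (simp_all add: power3_eq_cube)
    thus "(sp p 5 1)^2 \<le> (2507/500)^2" using sp_pos[of 5 1 p] by (intro power_mono) auto
    have "sp p 5 3 \<le> 5337/1000" by (rule cube_upper[OF p3]) (simp_all add: power3_eq_cube)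
    thus "(sp p 5 3)^2 \<le> (5337/1000)^2" using sp_pos[of 5 3 p] by (intro power_mono) auto
    show "sp p 3 3 \<le> 189/50" by (rule cube_upper[OF p3]) (simp_all add: power3_eq_cube)
    have "sp p 3 2 \<le> 409/125" by (rule cube_upper[OF p3]) (simp_all add: power3_eq_cube)
    thus "(sp p 3 2)^2 \<le> (409/125)^2" using sp_pos[of 3 2 p] by (intro power_mono) auto
  qed (simp_all add: power2_eq_square)
  moreover have "G3 5 p ?M < 0"
  proof (rule G3_neg_gen[OF p])
    show "5 \<le> sp p 5 1" "5 \<le> sp p 5 2" "5 \<le> sp p 5 4"
      using a_bounds(1)[OF p, of 5] by auto
    show "4 \<le> sp p 4 2" "4 \<le> sp p 4 1" using b_bounds[OF p] by auto
  qed (simp_all add: power2_eq_square)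
  ultimately show ?thesis by (intro sep[OF p]) (simp_all add: power2_eq_square)
qed

lemma case_6:
  assumes p: "p \<ge> 2"
  shows "\<exists>t4 t3. 8 \<le> t4 \<and> t4 < t3 \<and> H4 6 p t4 = 0 \<and> G3 6 p t3 = 0"
proof (cases "p \<le> 3")
  case True
  let ?M = "(17 :: real)"
  have "H4 6 p ?M > 0"
  proof (rule H4_pos_gen[OF p, where Bb="4243/1000" and Qq=13])
    show "(sp p 6 1)^2 \<le> 6^2 + 1^2" by (rule a_bounds(3)[OF p]) auto
    show "(sp p 6 3)^2 \<le> 6^2 + 3^2" by (rule a_bounds(3)[OF p]) auto
  qed (use b_bounds[OF p] in \<open>simp_all add: power2_eq_square\<close>)
  moreover have "G3 6 p ?M < 0"
  proof (rule G3_neg_gen[OF p])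
    show "6009/1000 \<le> sp p 6 1" by (rule cube_lower[OF p True]) (simp_all add: power3_eq_cube)
    show "6073/1000 \<le> sp p 6 2" by (rule cube_lower[OF p True]) (simp_all add: power3_eq_cube)
    show "3271/500 \<le> sp p 6 4" by (rule cube_lower[OF p True]) (simp_all add: power3_eq_cube)
    show "104/25 \<le> sp p 4 2" by (rule cube_lower[OF p True]) (simp_all add: power3_eq_cube)
    show "201/50 \<le> sp p 4 1" by (rule cube_lower[OF p True]) (simp_all add: power3_eq_cube)
  qed (simp_all add: power2_eq_square)
  ultimately show ?thesis by (intro sep[OF p]) (simp_all add: power2_eq_square)
next
  case False
  hence p3: "p \<ge> 3" by simp
  let ?M = "(163/10 :: real)"
  have "H4 6 p ?M > 0"
  proof (rule H4_pos_gen[OF p])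
    have "sp p 6 1 \<le> 601/100" by (rule cube_upper[OF p3]) (simp_all add: power3_eq_cube)
    thus "(sp p 6 1)^2 \<le> (601/100)^2" using sp_pos[of 6 1 p] by (intro power_mono) auto
    have "sp p 6 3 \<le> 6241/1000" by (rule cube_upper[OF p3]) (simp_all add: power3_eq_cube)
    thus "(sp p 6 3)^2 \<le> (6241/1000)^2" using sp_pos[of 6 3 p] by (intro power_mono) auto
    show "sp p 3 3 \<le> 189/50" by (rule cube_upper[OF p3]) (simp_all add: power3_eq_cube)
    have "sp p 3 2 \<le> 409/125" by (rule cube_upper[OF p3]) (simp_all add: power3_eq_cube)
    thus "(sp p 3 2)^2 \<le> (409/125)^2" using sp_pos[of 3 2 p] by (intro power_mono) auto
  qed (simp_all add: power2_eq_square)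
  moreover have "G3 6 p ?M < 0"
  proof (rule G3_neg_gen[OF p])
    show "6 \<le> sp p 6 1" "6 \<le> sp p 6 2" "6 \<le> sp p 6 4"
      using a_bounds(1)[OF p, of 6] by auto
    show "4 \<le> sp p 4 2" "4 \<le> sp p 4 1" using b_bounds[OF p] by auto
  qed (simp_all add: power2_eq_square)
  ultimately show ?thesis by (intro sep[OF p]) (simp_all add: power2_eq_square)
qed

lemma case_7:
  assumes p: "p \<ge> 2"
  shows "\<exists>t4 t3. 8 \<le> t4 \<and> t4 < t3 \<and> H4 7 p t4 = 0 \<and> G3 7 p t3 = 0"
proof (cases "p \<le> 3")
  case True
  let ?M = "(203/10 :: real)"
  have "H4 7 p ?M > 0"
  proof (rule H4_pos_gen[OF p, where Bb="4243/1000" and Qq=13])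
    show "(sp p 7 1)^2 \<le> 7^2 + 1^2" by (rule a_bounds(3)[OF p]) auto
    show "(sp p 7 3)^2 \<le> 7^2 + 3^2" by (rule a_bounds(3)[OF p]) auto
  qed (use b_bounds[OF p] in \<open>simp_all add: power2_eq_square\<close>)
  moreover have "G3 7 p ?M < 0"
  proof (rule G3_neg_gen[OF p])
    show "3503/500 \<le> sp p 7 1" by (rule cube_lower[OF p True]) (simp_all add: power3_eq_cube)
    show "3527/500 \<le> sp p 7 2" by (rule cube_lower[OF p True]) (simp_all add: power3_eq_cube)
    show "741/100 \<le> sp p 7 4" by (rule cube_lower[OF p True]) (simp_all add: power3_eq_cube)
    show "104/25 \<le> sp p 4 2" by (rule cube_lower[OF p True]) (simp_all add: power3_eq_cube)
    show "201/50 \<le> sp p 4 1" by (rule cube_lower[OF p True]) (simp_all add: power3_eq_cube)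
  qed (simp_all add: power2_eq_square)
  ultimately show ?thesis by (intro sep[OF p]) (simp_all add: power2_eq_square)
next
  case False
  hence p3: "p \<ge> 3" by simp
  let ?M = "(99/5 :: real)"
  have "H4 7 p ?M > 0"
  proof (rule H4_pos_gen[OF p])
    have "sp p 7 1 \<le> 7007/1000" by (rule cube_upper[OF p3]) (simp_all add: power3_eq_cube)
    thus "(sp p 7 1)^2 \<le> (7007/1000)^2" using sp_pos[of 7 1 p] by (intro power_mono) auto
    have "sp p 7 3 \<le> 359/50" by (rule cube_upper[OF p3]) (simp_all add: power3_eq_cube)
    thus "(sp p 7 3)^2 \<le> (359/50)^2" using sp_pos[of 7 3 p] by (intro power_mono) auto
    show "sp p 3 3 \<le> 189/50" by (rule cube_upper[OF p3]) (simp_all add: power3_eq_cube)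
    have "sp p 3 2 \<le> 409/125" by (rule cube_upper[OF p3]) (simp_all add: power3_eq_cube)
    thus "(sp p 3 2)^2 \<le> (409/125)^2" using sp_pos[of 3 2 p] by (intro power_mono) auto
  qed (simp_all add: power2_eq_square)
  moreover have "G3 7 p ?M < 0"
  proof (rule G3_neg_gen[OF p])
    show "7 \<le> sp p 7 1" "7 \<le> sp p 7 2" "7 \<le> sp p 7 4"
      using a_bounds(1)[OF p, of 7] by auto
    show "4 \<le> sp p 4 2" "4 \<le> sp p 4 1" using b_bounds[OF p] by auto
  qed (simp_all add: power2_eq_square)
  ultimately show ?thesis by (intro sep[OF p]) (simp_all add: power2_eq_square)
qed



lemma dia: "diamond_edge i j \<longleftrightarrow> (i=0 \<and> (j=1 \<or> j=2 \<or> j=3)) \<or> (i=1 \<and> (j=0 \<or> j=2 \<or> j=3)) \<or> ((i=2 \<or> i=3) \<and> (j=0 \<or> j=1))"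
  unfolding diamond_edge_def by (simp only: insert_iff empty_iff doubleton_eq_iff) arith
lemma ex5: "(\<exists>k. 5 \<le> k \<and> {i,j} = {0::nat,k}) \<longleftrightarrow> (i=0 \<and> j \<ge> 5) \<or> (i \<ge> 5 \<and> j=0)"
  by (auto simp: doubleton_eq_iff)
lemma B3e: "B3_edge i j \<longleftrightarrow> (i=0 \<and> (j=1 \<or> j=2 \<or> j=3 \<or> j \<ge> 5)) \<or> (i=1 \<and> (j=0 \<or> j=2 \<or> j=3 \<or> j=4)) \<or> ((i=2 \<or> i=3) \<and> (j=0 \<or> j=1)) \<or> (i=4 \<and> j=1) \<or> (i \<ge> 5 \<and> j=0)"
  unfolding B3_edge_def dia ex5 by (simp only: doubleton_eq_iff) arith
lemma ex4: "(\<exists>k. 4 \<le> k \<and> {i,j} = {2::nat,k}) \<longleftrightarrow> (i=2 \<and> j \<ge> 4) \<or> (i \<ge> 4 \<and> j=2)"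
  by (auto simp: doubleton_eq_iff)
lemma B4e: "B4_edge i j \<longleftrightarrow> (i=0 \<and> (j=1 \<or> j=2 \<or> j=3)) \<or> (i=1 \<and> (j=0 \<or> j=2 \<or> j=3)) \<or> (i=2 \<and> (j=0 \<or> j=1 \<or> j \<ge> 4)) \<or> (i=3 \<and> (j=0 \<or> j=1)) \<or> (i \<ge> 4 \<and> j=2)"
  unfolding B4_edge_def dia ex4 by arith

lemma B3_0: "B3_edge 0 j \<longleftrightarrow> j=1 \<or> j=2 \<or> j=3 \<or> j \<ge> 5" by (simp add: B3e)
lemma B3_1: "B3_edge 1 j \<longleftrightarrow> j=0 \<or> j=2 \<or> j=3 \<or> j=4" by (simp add: B3e)
lemma B3_2: "B3_edge 2 j \<longleftrightarrow> j=0 \<or> j=1" by (simp add: B3e)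
lemma B3_3: "B3_edge 3 j \<longleftrightarrow> j=0 \<or> j=1" by (simp add: B3e)
lemma B3_4: "B3_edge 4 j \<longleftrightarrow> j=1" by (simp add: B3e)
lemma B3_5: "i \<ge> 5 \<Longrightarrow> B3_edge i j \<longleftrightarrow> j=0" by (simp add: B3e)
lemma B4_0: "B4_edge 0 j \<longleftrightarrow> j=1 \<or> j=2 \<or> j=3" by (simp add: B4e)
lemma B4_1: "B4_edge 1 j \<longleftrightarrow> j=0 \<or> j=2 \<or> j=3" by (simp add: B4e)
lemma B4_2: "B4_edge 2 j \<longleftrightarrow> j=0 \<or> j=1 \<or> j \<ge> 4" by (simp add: B4e)
lemma B4_3: "B4_edge 3 j \<longleftrightarrow> j=0 \<or> j=1" by (simp add: B4e)
lemma B4_4: "i \<ge> 4 \<Longrightarrow> B4_edge i j \<longleftrightarrow> j=2" by (simp add: B4e)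

lemma d3_0: assumes n: "n \<ge> 6" shows "degree n B3_edge 0 = n - 2"
proof -
  have "{j \<in> {0..<n}. B3_edge 0 j} = insert 1 (insert 2 (insert 3 {5..<n}))"
    using n unfolding B3_0 by auto
  hence "degree n B3_edge 0 = card (insert 1 (insert 2 (insert 3 {5..<n::nat})))" unfolding degree_def by simp
  also have "\<dots> = n - 2" using n by simp
  finally show ?thesis .
qed
lemma d3_1: assumes n: "n \<ge> 6" shows "degree n B3_edge 1 = 4"
proof -
  have "{j \<in> {0..<n}. B3_edge 1 j} = {0,2,3,4}" using n unfolding B3_1 by auto
  thus ?thesis unfolding degree_def by simp
qed
lemma d3_2: assumes n: "n \<ge> 6" shows "degree n B3_edge 2 = 2"
proof -
  have "{j \<in> {0..<n}. B3_edge 2 j} = {0,1}" using n unfolding B3_2 by auto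
  thus ?thesis unfolding degree_def by simp
qed
lemma d3_3: assumes n: "n \<ge> 6" shows "degree n B3_edge 3 = 2"
proof -
  have "{j \<in> {0..<n}. B3_edge 3 j} = {0,1}" using n unfolding B3_3 by auto
  thus ?thesis unfolding degree_def by simp
qed
lemma d3_4: assumes n: "n \<ge> 6" shows "degree n B3_edge 4 = 1"
proof -
  have "{j \<in> {0..<n}. B3_edge 4 j} = {1}" using n unfolding B3_4 by auto
  thus ?thesis unfolding degree_def by simp
qed
lemma d3_5: assumes n: "n \<ge> 6" "i \<ge> 5" shows "degree n B3_edge i = 1"
proof -
  have "\<forall>j. B3_edge i j \<longleftrightarrow> j = 0" using B3_5[OF n(2)] by blast
  hence "{j \<in> {0..<n}. B3_edge i j} = {j \<in> {0..<n}. j = 0}" by simp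
  also have "\<dots> = {0}" using n by auto
  finally have "{j \<in> {0..<n}. B3_edge i j} = {0}" .
  thus ?thesis unfolding degree_def by simp
qed
lemma d4_0: assumes n: "n \<ge> 6" shows "degree n B4_edge 0 = 3"
proof -
  have "{j \<in> {0..<n}. B4_edge 0 j} = {1,2,3}" using n unfolding B4_0 by auto
  thus ?thesis unfolding degree_def by simp
qed
lemma d4_1: assumes n: "n \<ge> 6" shows "degree n B4_edge 1 = 3"
proof -
  have "{j \<in> {0..<n}. B4_edge 1 j} = {0,2,3}" using n unfolding B4_1 by auto
  thus ?thesis unfolding degree_def by simp
qed
lemma d4_2: assumes n: "n \<ge> 6" shows "degree n B4_edge 2 = n - 2"
proof -
  have "{j \<in> {0..<n}. B4_edge 2 j} = insert 0 (insert 1 {4..<n})"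
    using n unfolding B4_2 by auto
  hence "degree n B4_edge 2 = card (insert 0 (insert 1 {4..<n::nat}))" unfolding degree_def by simp
  also have "\<dots> = n - 2" using n by simp
  finally show ?thesis .
qed
lemma d4_3: assumes n: "n \<ge> 6" shows "degree n B4_edge 3 = 2"
proof -
  have "{j \<in> {0..<n}. B4_edge 3 j} = {0,1}" using n unfolding B4_3 by auto
  thus ?thesis unfolding degree_def by simp
qed
lemma d4_4: assumes n: "n \<ge> 6" "i \<ge> 4" shows "degree n B4_edge i = 1"
proof -
  have "\<forall>j. B4_edge i j \<longleftrightarrow> j = 2" using B4_4[OF n(2)] by blast
  hence "{j \<in> {0..<n}. B4_edge i j} = {j \<in> {0..<n}. j = 2}" by simp
  also have "\<dots> = {2}" using n by auto
  finally have "{j \<in> {0..<n}. B4_edge i j} = {2}" .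
  thus ?thesis unfolding degree_def by simp
qed

lemma sum_split5:
  fixes n :: nat
  assumes "n \<ge> 5"
  shows "(\<Sum>j = 0..<n. f j) = f 0 + f 1 + f 2 + f 3 + f 4 + (\<Sum>j = 5..<n. f j)"
proof -
  have "(\<Sum>j = 0..<n. f j) = (\<Sum>j = 0..<5. f j) + (\<Sum>j = 5..<n. f j)"
    using assms by (simp add: sum.atLeastLessThan_concat)
  moreover have "(\<Sum>j = 0..<5. f j) = f 0 + f 1 + f 2 + f 3 + f 4"
    by (simp add: eval_nat_numeral)
  ultimately show ?thesis by simp
qed

lemma sombor_carrier: "sombor_matrix n E p \<in> carrier_mat n n"
  unfolding sombor_matrix_def by simp

lemma sombor_mult:
  assumes "i < n" "x \<in> carrier_vec n"
  shows "(sombor_matrix n E p *\<^sub>v x) $ i =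
    (\<Sum>j = 0..<n. (if E i j then sp p (real (degree n E i)) (real (degree n E j)) else 0) * x $ j)"
  using assms unfolding sombor_matrix_def sp_def
  by (simp add: scalar_prod_def)



lemma eig_finite:
  fixes A :: "real mat"
  assumes A: "A \<in> carrier_mat n n"
  shows "finite {k. eigenvalue A k}"
proof -
  have "coeff (char_poly A) n = 1" using degree_monic_char_poly[OF A] by simp
  hence "char_poly A \<noteq> 0" by auto
  hence "finite {k. poly (char_poly A) k = 0}" by (rule poly_roots_finite)
  thus ?thesis using eigenvalue_root_char_poly[OF A] by simp
qed

lemma cw_bound:
  fixes A :: "real mat"
  assumes A: "A \<in> carrier_mat n n" and nn: "\<And>i j. i < n \<Longrightarrow> j < n \<Longrightarrow> A $$ (i,j) \<ge> 0"
    and x: "x \<in> carrier_vec n" and xp: "\<And>i. i < n \<Longrightarrow> x $ i > 0"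
    and ev: "A *\<^sub>v x = t \<cdot>\<^sub>v x" and k: "eigenvalue A k"
  shows "k \<le> t"
proof -
  obtain v where v: "v \<in> carrier_vec n" "v \<noteq> 0\<^sub>v n" "A *\<^sub>v v = k \<cdot>\<^sub>v v"
    using k A unfolding eigenvalue_def eigenvector_def by auto
  define w where "w i = \<bar>v $ i\<bar> / x $ i" for i
  obtain i1 where i1: "i1 < n" "v $ i1 \<noteq> 0"
  proof (rule ccontr)
    assume "\<not> thesis"
    hence "\<forall>i<n. v $ i = 0" using that by blast
    hence "v = 0\<^sub>v n" using v(1) by (intro eq_vecI) auto
    thus False using v(2) by simp
  qed
  have fin: "finite (w ` {..<n})" "w ` {..<n} \<noteq> {}" using i1 by auto
  obtain i0 where i0: "i0 < n" "w i0 = Max (w ` {..<n})" using Max_in[OF fin] by auto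
  have wmax: "\<And>j. j < n \<Longrightarrow> w j \<le> w i0" using i0 fin by auto
  have "w i1 > 0" unfolding w_def using i1 xp by auto
  hence w0: "w i0 > 0" using wmax[OF i1(1)] by simp
  have vi0: "\<bar>v $ i0\<bar> = w i0 * x $ i0" unfolding w_def using xp[OF i0(1)] by simp
  hence vpos: "\<bar>v $ i0\<bar> > 0" using w0 xp[OF i0(1)] by simp
  have rowv: "(A *\<^sub>v v) $ i0 = (\<Sum>j = 0..<n. A $$ (i0, j) * v $ j)"
    using A v(1) i0 by (simp add: scalar_prod_def)
  have rowx: "(A *\<^sub>v x) $ i0 = (\<Sum>j = 0..<n. A $$ (i0, j) * x $ j)"
    using A x i0 by (simp add: scalar_prod_def)
  have "\<bar>k\<bar> * \<bar>v $ i0\<bar> = \<bar>(A *\<^sub>v v) $ i0\<bar>" using v i0 by (simp add: abs_mult)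
  also have "\<dots> \<le> (\<Sum>j = 0..<n. \<bar>A $$ (i0, j) * v $ j\<bar>)" unfolding rowv by (rule sum_abs)
  also have "\<dots> \<le> (\<Sum>j = 0..<n. A $$ (i0, j) * (w i0 * x $ j))"
  proof (rule sum_mono)
    fix j assume j: "j \<in> {0..<n}"
    have "\<bar>v $ j\<bar> = w j * x $ j" unfolding w_def using xp[of j] j by simp
    also have "\<dots> \<le> w i0 * x $ j" using wmax[of j] xp[of j] j by (intro mult_right_mono) auto
    finally have "\<bar>v $ j\<bar> \<le> w i0 * x $ j" .
    thus "\<bar>A $$ (i0, j) * v $ j\<bar> \<le> A $$ (i0, j) * (w i0 * x $ j)"
      using nn[OF i0(1), of j] j by (simp add: abs_mult mult_left_mono)
  qed
  also have "\<dots> = w i0 * (A *\<^sub>v x) $ i0" unfolding rowx by (simp add: sum_distrib_left algebra_simps)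
  also have "\<dots> = t * \<bar>v $ i0\<bar>" using ev x i0 vi0 by simp
  finally have "\<bar>k\<bar> * \<bar>v $ i0\<bar> \<le> t * \<bar>v $ i0\<bar>" .
  hence "\<bar>k\<bar> \<le> t" using vpos by simp
  thus ?thesis by simp
qed


lemma tail_const:
  fixes f :: "nat \<Rightarrow> real"
  assumes "\<And>j. 5 \<le> j \<Longrightarrow> j < n \<Longrightarrow> f j = c"
  shows "(\<Sum>j = 5..<n. f j) = real (n - 5) * c"
proof -
  have "(\<Sum>j = 5..<n. f j) = (\<Sum>j = 5..<n. c)" using assms by (intro sum.cong) auto
  thus ?thesis by simp
qed

lemma B3_1s: "B3_edge (Suc 0) j \<longleftrightarrow> j=0 \<or> j=2 \<or> j=3 \<or> j=4" using B3_1 by simp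
lemma B4_1s: "B4_edge (Suc 0) j \<longleftrightarrow> j=0 \<or> j=2 \<or> j=3" using B4_1 by simp

lemma B3_eig:
  assumes n: "n \<ge> 6" and p: "p \<ge> 2" and t: "t \<ge> 8" and g: "G3 (real n - 2) p t = 0"
  shows "eigenvalue (sombor_matrix n B3_edge p) t"
proof -
  define D where "D = real n - 2"
  define a1 where "a1 = sp p D 1"
  define a2 where "a2 = sp p D 2"
  define a4 where "a4 = sp p D 4"
  define b42 where "b42 = sp p 4 2"
  define b41 where "b41 = sp p 4 1"
  define E where "E = E3 p t"
  have Ep: "E > 0" unfolding E_def using E3_pos[OF p t] by simp
  have tp: "t > 0" using t by simp
  define \<beta> where "\<beta> = (t * a4 + 2 * a2 * b42) / E"
  define \<gamma> where "\<gamma> = (a2 + b42 * \<beta>) / t"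
  define \<delta> where "\<delta> = b41 * \<beta> / t"
  define \<epsilon> where "\<epsilon> = a1 / t"
  define x where "x = vec n (\<lambda>j. if j = 0 then 1 else if j = 1 then \<beta> else if j = 2 \<or> j = 3 then \<gamma>
                          else if j = 4 then \<delta> else \<epsilon>)"
  have Ed: "E = t^2 - 2 * b42^2 - b41^2" unfolding E_def E3_def b42_def b41_def by simp
  have gd: "t^2 - (D - 3) * a1^2 - 2 * a2^2 - (t * a4 + 2 * a2 * b42)^2 / E = 0"
    using g unfolding G3_def D_def a1_def a2_def a4_def b42_def E_def by simp
  have x: "x \<in> carrier_vec n" unfolding x_def by simp
  let ?A = "sombor_matrix n B3_edge p"
  let ?dg = "\<lambda>j. real (degree n B3_edge j)"
  have n5: "n \<ge> 5" using n by simp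
  have dg0: "?dg 0 = D" using d3_0[OF n] n unfolding D_def by (simp add: of_nat_diff)
  have dg1: "?dg 1 = 4" "?dg (Suc 0) = 4" using d3_1[OF n] by simp_all
  have dg2: "?dg 2 = 2" using d3_2[OF n] by simp
  have dg3: "?dg 3 = 2" using d3_3[OF n] by simp
  have dg4: "?dg 4 = 1" using d3_4[OF n] by simp
  have dg5: "\<And>j. j \<ge> 5 \<Longrightarrow> ?dg j = 1" using d3_5[OF n] by simp
  have x0: "x $ 0 = 1" and x1: "x $ 1 = \<beta>" "x $ Suc 0 = \<beta>" and x2: "x $ 2 = \<gamma>" and x3: "x $ 3 = \<gamma>" and x4: "x $ 4 = \<delta>"
    using n unfolding x_def by auto
  have x5: "\<And>j. j \<ge> 5 \<Longrightarrow> j < n \<Longrightarrow> x $ j = \<epsilon>" unfolding x_def by auto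
  have row: "\<And>i. i < n \<Longrightarrow> (?A *\<^sub>v x) $ i =
      (\<Sum>j = 0..<n. (if B3_edge i j then sp p (?dg i) (?dg j) else 0) * x $ j)"
    by (rule sombor_mult[OF _ x])
  have eq: "(?A *\<^sub>v x) $ i = t * x $ i" if i: "i < n" for i
  proof -
    consider "i = 0" | "i = 1" | "i = 2" | "i = 3" | "i = 4" | "i \<ge> 5" by arith
    thus ?thesis
    proof cases
      case 1
      have tl: "(\<Sum>j = 5..<n. (if B3_edge 0 j then sp p (?dg 0) (?dg j) else 0) * x $ j) = real (n - 5) * (a1 * \<epsilon>)"
        by (rule tail_const) (simp add: B3_0 dg0 dg5 x5 a1_def)
      have "(?A *\<^sub>v x) $ i = a4 * \<beta> + a2 * \<gamma> + a2 * \<gamma> + real (n - 5) * (a1 * \<epsilon>)"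
        unfolding 1 row[OF i[unfolded 1]] sum_split5[OF n5] tl
        by (simp add: B3_0 dg0 dg1 dg2 dg3 x1 x2 x3 a4_def a2_def)
      also have "real (n - 5) = D - 3" using n unfolding D_def by (simp add: of_nat_diff)
      also have "a4 * \<beta> + a2 * \<gamma> + a2 * \<gamma> + (D - 3) * (a1 * \<epsilon>) = t"
      proof -
        have "(t * a4 + 2 * a2 * b42)^2 / E = (t * a4 + 2 * a2 * b42) * \<beta>"
          unfolding \<beta>_def using Ep by (simp add: power2_eq_square)
        hence H: "t^2 = (D - 3) * a1^2 + 2 * a2^2 + (t * a4 + 2 * a2 * b42) * \<beta>" using gd by simp
        have "t * (a4 * \<beta> + a2 * \<gamma> + a2 * \<gamma> + (D - 3) * (a1 * \<epsilon>))
            = a4 * \<beta> * t + 2 * a2 * (a2 + b42 * \<beta>) + (D - 3) * a1^2"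
          unfolding \<gamma>_def \<epsilon>_def using tp by (simp add: field_simps power2_eq_square)
        also have "\<dots> = t * t" using H by (simp add: algebra_simps power2_eq_square)
        finally show ?thesis using tp by simp
      qed
      finally show ?thesis using 1 x0 by simp
    next
      case 2
      have tl: "(\<Sum>j = 5..<n. (if B3_edge 1 j then sp p (?dg 1) (?dg j) else 0) * x $ j) = real (n - 5) * 0"
        by (rule tail_const) (simp add: B3_1 B3_1s)
      have "(?A *\<^sub>v x) $ i = a4 + b42 * \<gamma> + b42 * \<gamma> + b41 * \<delta>"
        unfolding 2 row[OF i[unfolded 2]] sum_split5[OF n5] tl
        by (simp add: B3_1 B3_1s dg0 dg1 dg2 dg3 dg4 x0 x2 x3 x4 a4_def b42_def b41_def sp_sym[of p 4 D])
      also have "\<dots> = t * \<beta>"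
      proof -
        have "\<beta> * E = t * a4 + 2 * a2 * b42" unfolding \<beta>_def using Ep by simp
        thus ?thesis unfolding \<gamma>_def \<delta>_def Ed using tp
          by (simp add: field_simps power2_eq_square)
      qed
      finally show ?thesis using 2 x1 by simp
    next
      case 3
      have tl: "(\<Sum>j = 5..<n. (if B3_edge 2 j then sp p (?dg 2) (?dg j) else 0) * x $ j) = real (n - 5) * 0"
        by (rule tail_const) (simp add: B3_2)
      have "(?A *\<^sub>v x) $ i = a2 + b42 * \<beta>"
        unfolding 3 row[OF i[unfolded 3]] sum_split5[OF n5] tl
        by (simp add: B3_2 dg0 dg1 dg2 x0 x1 a2_def b42_def sp_sym[of p 2 D] sp_sym[of p 2 4])
      also have "\<dots> = t * \<gamma>" unfolding \<gamma>_def using tp by simp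
      finally show ?thesis using 3 x2 by simp
    next
      case 4
      have tl: "(\<Sum>j = 5..<n. (if B3_edge 3 j then sp p (?dg 3) (?dg j) else 0) * x $ j) = real (n - 5) * 0"
        by (rule tail_const) (simp add: B3_3)
      have "(?A *\<^sub>v x) $ i = a2 + b42 * \<beta>"
        unfolding 4 row[OF i[unfolded 4]] sum_split5[OF n5] tl
        by (simp add: B3_3 dg0 dg1 dg3 x0 x1 a2_def b42_def sp_sym[of p 2 D] sp_sym[of p 2 4])
      also have "\<dots> = t * \<gamma>" unfolding \<gamma>_def using tp by simp
      finally show ?thesis using 4 x3 by simp
    next
      case 5
      have tl: "(\<Sum>j = 5..<n. (if B3_edge 4 j then sp p (?dg 4) (?dg j) else 0) * x $ j) = real (n - 5) * 0"
        by (rule tail_const) (simp add: B3_4)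
      have "(?A *\<^sub>v x) $ i = b41 * \<beta>"
        unfolding 5 row[OF i[unfolded 5]] sum_split5[OF n5] tl
        by (simp add: B3_4 dg1 dg4 x1 b41_def sp_sym[of p 1 4])
      also have "\<dots> = t * \<delta>" unfolding \<delta>_def using tp by simp
      finally show ?thesis using 5 x4 by simp
    next
      case 6
      have tl: "(\<Sum>j = 5..<n. (if B3_edge i j then sp p (?dg i) (?dg j) else 0) * x $ j) = real (n - 5) * 0"
        by (rule tail_const) (use 6 in \<open>simp add: B3_5\<close>)
      have "(?A *\<^sub>v x) $ i = a1"
        unfolding row[OF i] sum_split5[OF n5] tl using 6
        by (simp add: B3_5 dg0 dg5 x0 a1_def sp_sym[of p 1 D])
      also have "\<dots> = t * \<epsilon>" unfolding \<epsilon>_def using tp by simp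
      finally show ?thesis using 6 x5 i by simp
    qed
  qed
  have "?A *\<^sub>v x = t \<cdot>\<^sub>v x"
    by (rule eq_vecI) (use eq in \<open>auto simp: sombor_matrix_def x_def\<close>)
  moreover have "x \<noteq> 0\<^sub>v n"
  proof
    assume "x = 0\<^sub>v n"
    hence "x $ 0 = 0" using n by simp
    thus False using x0 by simp
  qed
  ultimately show ?thesis unfolding eigenvalue_def eigenvector_def using x
    by (intro exI[of _ x]) (auto simp: sombor_matrix_def)
qed


lemma B4_eig:
  assumes n: "n \<ge> 6" and p: "p \<ge> 2" and t: "t \<ge> 8" and h: "H4 (real n - 2) p t = 0"
  shows "eigenvalue (sombor_matrix n B4_edge p) t"
    and "\<And>k. eigenvalue (sombor_matrix n B4_edge p) k \<Longrightarrow> k \<le> t"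
proof -
  define D where "D = real n - 2"
  define a1 where "a1 = sp p D 1"
  define a3 where "a3 = sp p D 3"
  define b33 where "b33 = sp p 3 3"
  define b32 where "b32 = sp p 3 2"
  define E where "E = E4 p t"
  have Ep: "E > 0" unfolding E_def using E4_pos[OF p t] by simp
  have tp: "t > 0" using t by simp
  have Dp: "D > 0" using n unfolding D_def by simp
  have pos: "a1 > 0" "a3 > 0" "b32 > 0" unfolding a1_def a3_def b32_def using Dp by (auto intro!: sp_pos)
  define \<beta> where "\<beta> = a3 * t / E"
  define \<gamma> where "\<gamma> = 2 * b32 * \<beta> / t"
  define \<epsilon> where "\<epsilon> = a1 / t"
  have bp: "\<beta> > 0" "\<gamma> > 0" "\<epsilon> > 0" unfolding \<gamma>_def \<epsilon>_def \<beta>_def using pos tp Ep by auto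
  define x where "x = vec n (\<lambda>j. if j = 0 \<or> j = 1 then \<beta> else if j = 2 then 1 else if j = 3 then \<gamma> else \<epsilon>)"
  have Ed: "E = t^2 - b33 * t - 2 * b32^2" unfolding E_def E4_def b33_def b32_def by simp
  have hd: "t^2 - (D - 2) * a1^2 - 2 * a3^2 * t^2 / E = 0"
    using h unfolding H4_def D_def a1_def a3_def E_def by simp
  have x: "x \<in> carrier_vec n" unfolding x_def by simp
  let ?A = "sombor_matrix n B4_edge p"
  let ?dg = "\<lambda>j. real (degree n B4_edge j)"
  have n5: "n \<ge> 5" using n by simp
  have dg0: "?dg 0 = 3" using d4_0[OF n] by simp
  have dg1: "?dg 1 = 3" "?dg (Suc 0) = 3" using d4_1[OF n] by simp_all
  have dg2: "?dg 2 = D" using d4_2[OF n] n unfolding D_def by (simp add: of_nat_diff)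
  have dg3: "?dg 3 = 2" using d4_3[OF n] by simp
  have dg4: "\<And>j. j \<ge> 4 \<Longrightarrow> ?dg j = 1" using d4_4[OF n] by simp
  have x0: "x $ 0 = \<beta>" and x1: "x $ 1 = \<beta>" "x $ Suc 0 = \<beta>" and x2: "x $ 2 = 1" and x3: "x $ 3 = \<gamma>"
    and x4: "x $ 4 = \<epsilon>"
    using n unfolding x_def by auto
  have x5: "\<And>j. j \<ge> 4 \<Longrightarrow> j < n \<Longrightarrow> x $ j = \<epsilon>" unfolding x_def by auto
  have row: "\<And>i. i < n \<Longrightarrow> (?A *\<^sub>v x) $ i =
      (\<Sum>j = 0..<n. (if B4_edge i j then sp p (?dg i) (?dg j) else 0) * x $ j)"
    by (rule sombor_mult[OF _ x])
  have r01: "b33 * \<beta> + a3 + b32 * \<gamma> = t * \<beta>"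
  proof -
    have bE: "\<beta> * E = a3 * t" unfolding \<beta>_def using Ep by simp
    have "t * (b33 * \<beta> + a3 + b32 * \<gamma>) = b33 * \<beta> * t + a3 * t + 2 * b32^2 * \<beta>"
      unfolding \<gamma>_def using tp by (simp add: field_simps power2_eq_square)
    also have "\<dots> = t * (t * \<beta>)" using bE unfolding Ed by (simp add: algebra_simps power2_eq_square)
    finally show ?thesis using tp by simp
  qed
  have eq: "(?A *\<^sub>v x) $ i = t * x $ i" if i: "i < n" for i
  proof -
    consider "i = 0" | "i = 1" | "i = 2" | "i = 3" | "i \<ge> 4" by arith
    thus ?thesis
    proof cases
      case 1
      have tl: "(\<Sum>j = 5..<n. (if B4_edge 0 j then sp p (?dg 0) (?dg j) else 0) * x $ j) = real (n - 5) * 0"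
        by (rule tail_const) (simp add: B4_0)
      have "(?A *\<^sub>v x) $ i = b33 * \<beta> + a3 + b32 * \<gamma>"
        unfolding 1 row[OF i[unfolded 1]] sum_split5[OF n5] tl
        by (simp add: B4_0 dg0 dg1 dg2 dg3 x1 x2 x3 b33_def a3_def b32_def sp_sym[of p 3 D])
      thus ?thesis using 1 x0 r01 by simp
    next
      case 2
      have tl: "(\<Sum>j = 5..<n. (if B4_edge 1 j then sp p (?dg 1) (?dg j) else 0) * x $ j) = real (n - 5) * 0"
        by (rule tail_const) (simp add: B4_1 B4_1s)
      have "(?A *\<^sub>v x) $ i = b33 * \<beta> + a3 + b32 * \<gamma>"
        unfolding 2 row[OF i[unfolded 2]] sum_split5[OF n5] tl
        by (simp add: B4_1 B4_1s dg0 dg1 dg2 dg3 x0 x2 x3 b33_def a3_def b32_def sp_sym[of p 3 D])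
      thus ?thesis using 2 x1 r01 by simp
    next
      case 3
      have tl: "(\<Sum>j = 5..<n. (if B4_edge 2 j then sp p (?dg 2) (?dg j) else 0) * x $ j) = real (n - 5) * (a1 * \<epsilon>)"
        by (rule tail_const) (simp add: B4_2 dg2 dg4 x5 a1_def)
      have "(?A *\<^sub>v x) $ i = a3 * \<beta> + a3 * \<beta> + a1 * \<epsilon> + real (n - 5) * (a1 * \<epsilon>)"
        unfolding 3 row[OF i[unfolded 3]] sum_split5[OF n5] tl
        by (simp add: B4_2 dg0 dg1 dg2 dg4 x0 x1 x4 a3_def a1_def)
      also have "real (n - 5) = D - 3" using n unfolding D_def by (simp add: of_nat_diff)
      also have "a3 * \<beta> + a3 * \<beta> + a1 * \<epsilon> + (D - 3) * (a1 * \<epsilon>) = t"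
      proof -
        have "2 * a3^2 * t^2 / E = t * (a3 * \<beta> + a3 * \<beta>)"
          unfolding \<beta>_def using Ep by (simp add: power2_eq_square field_simps)
        hence H: "t^2 = (D - 2) * a1^2 + t * (a3 * \<beta> + a3 * \<beta>)" using hd by simp
        have "t * (a3 * \<beta> + a3 * \<beta> + a1 * \<epsilon> + (D - 3) * (a1 * \<epsilon>))
            = t * (a3 * \<beta> + a3 * \<beta>) + (D - 2) * a1^2"
          unfolding \<epsilon>_def using tp by (simp add: field_simps power2_eq_square)
        also have "\<dots> = t * t" using H by (simp add: algebra_simps power2_eq_square)
        finally show ?thesis using tp by simp
      qed
      finally show ?thesis using 3 x2 by simp
    next
      case 4
      have tl: "(\<Sum>j = 5..<n. (if B4_edge 3 j then sp p (?dg 3) (?dg j) else 0) * x $ j) = real (n - 5) * 0"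
        by (rule tail_const) (simp add: B4_3)
      have "(?A *\<^sub>v x) $ i = b32 * \<beta> + b32 * \<beta>"
        unfolding 4 row[OF i[unfolded 4]] sum_split5[OF n5] tl
        by (simp add: B4_3 dg0 dg1 dg3 x0 x1 b32_def sp_sym[of p 2 3])
      also have "\<dots> = t * \<gamma>" unfolding \<gamma>_def using tp by simp
      finally show ?thesis using 4 x3 by simp
    next
      case 5
      have tl: "(\<Sum>j = 5..<n. (if B4_edge i j then sp p (?dg i) (?dg j) else 0) * x $ j) = real (n - 5) * 0"
        by (rule tail_const) (use 5 in \<open>simp add: B4_4\<close>)
      have "(?A *\<^sub>v x) $ i = a1"
        unfolding row[OF i] sum_split5[OF n5] tl using 5
        by (simp add: B4_4 dg2 dg4 x2 a1_def sp_sym[of p 1 D])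
      also have "\<dots> = t * \<epsilon>" unfolding \<epsilon>_def using tp by simp
      finally show ?thesis using 5 x5 i by simp
    qed
  qed
  have ev: "?A *\<^sub>v x = t \<cdot>\<^sub>v x"
    by (rule eq_vecI) (use eq in \<open>auto simp: sombor_matrix_def x_def\<close>)
  moreover have "x \<noteq> 0\<^sub>v n"
  proof
    assume "x = 0\<^sub>v n"
    hence "x $ 2 = 0" using n by simp
    thus False using x2 by simp
  qed
  ultimately show "eigenvalue ?A t" unfolding eigenvalue_def eigenvector_def using x
    by (intro exI[of _ x]) (auto simp: sombor_matrix_def)
  fix k assume k: "eigenvalue ?A k"
  show "k \<le> t"
  proof (rule cw_bound[OF sombor_carrier _ x _ ev k])
    fix i j assume "i < n" "j < n"
    thus "0 \<le> ?A $$ (i, j)" unfolding sombor_matrix_def by simp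
  next
    fix i assume i: "i < n"
    show "0 < x $ i" using bp i unfolding x_def by simp
  qed
qed


lemma analytic:
  assumes n: "n \<ge> 6" and p: "p \<ge> 2"
  shows "\<exists>t4 t3. 8 \<le> t4 \<and> t4 < t3 \<and> H4 (real n - 2) p t4 = 0 \<and> G3 (real n - 2) p t3 = 0"
proof -
  consider "n = 6" | "n = 7" | "n = 8" | "n = 9" | "n \<ge> 10" using n by arith
  thus ?thesis
  proof cases
    case 1 thus ?thesis using case_4[OF p] by simp
  next
    case 2 thus ?thesis using case_5[OF p] by simp
  next
    case 3 thus ?thesis using case_6[OF p] by simp
  next
    case 4 thus ?thesis using case_7[OF p] by simp
  next
    case 5
    hence "real n - 2 \<ge> 8" by simp
    thus ?thesis using big_case[OF p] by blast
  qed
qed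

theorem lemma5p1:
  fixes n :: nat and p :: real
  assumes "n \<ge> 6" and "p \<ge> 2"
  shows "rho (sombor_matrix n B4_edge p) < rho (sombor_matrix n B3_edge p)"
proof -
  obtain t4 t3 where t: "8 \<le> t4" "t4 < t3" "H4 (real n - 2) p t4 = 0" "G3 (real n - 2) p t3 = 0"
    using analytic[OF assms] by blast
  have fin4: "finite {k. eigenvalue (sombor_matrix n B4_edge p) k}"
    by (rule eig_finite[OF sombor_carrier])
  have fin3: "finite {k. eigenvalue (sombor_matrix n B3_edge p) k}"
    by (rule eig_finite[OF sombor_carrier])
  have "rho (sombor_matrix n B4_edge p) = t4"
    unfolding rho_def
    by (rule Max_eqI[OF fin4]) (use B4_eig[OF assms t(1,3)] in auto)
  moreover have "t3 \<le> rho (sombor_matrix n B3_edge p)"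
    unfolding rho_def
    by (rule Max_ge[OF fin3]) (use B3_eig[OF assms _ t(4)] t in auto)
  ultimately show ?thesis using t by simp
qed

end
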